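(* Under the hypotheses and notation below, the generating function of bridges, counted by length (variable $t$) and abscissa of the endpoint (variable $x$, the abscissa being $\le 0$), is $$B(\bar x;t)=1-\sqrt{D\,\bar\Delta(\bar x)}.$$
   Context: $\mathcal H=\{(k,0):k\le0\}$; $A\subset\mathbb{Z}^2$ is finite, symmetric ($(i,j)\in A\Rightarrow(i,-j)\in A$), has small height variations ($|j|\le1$ for all $(i,j)\in A$), and $A_1\ne0$. A walk with steps in $A$ is a sequence $(w_0,\dots,w_n)$ with $w_m-w_{m-1}\in A$. A bridge is a walk of length $n\ge1$ with $w_0=(0,0)$, $w_n\in\mathcal H$, and $w_m\notin\mathcal H$ for $1\le m\le n-1$. Write $\bar x=1/x$, $A_0(x)=\sum_{(i,0)\in A}x^i$, $A_1(x)=\sum_{(i,1)\in A}x^i$, $\delta(x;t)=(1-tA_0(x))^2-4t^2A_1(x)^2$, and let $(D,\Delta(x),\bar\Delta(\bar x))$ be the canonical factorization of $\delta$: the unique triple of formal power series in $t$ with $\delta=D\Delta(x)\bar\Delta(\bar x)$, $D$ with real coefficients, $\Delta(x)$ with coefficients in $\mathbb{R}[x]$, $\bar\Delta(\bar x)$ with coefficients in $\mathbb{R}[\bar x]$, and $D(0)=\Delta(0;t)=\bar\Delta(0;t)=\Delta(x;0)=\bar\Delta(\bar x;0)=1$. The square root is the power series with constant term $1$. *)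

theory Defs
  imports "HOL-Computational_Algebra.Formal_Laurent_Series"
begin

text \<open>Series in t whose coefficients are (Laurent) polynomials in x are modelled as
  elements of type real fls fps: power series in t (fps_X) with coefficients formal
  Laurent series in x (fls_X); fls_X_intpow k is x^k, so x-bar^k is fls_X_intpow (-k).\<close>

definition halfline :: "(int \<times> int) set" where
  "halfline = {(k, 0) | k. k \<le> 0}"

definition is_walk :: "(int \<times> int) set \<Rightarrow> (int \<times> int) list \<Rightarrow> bool" where
  "is_walk A w \<longleftrightarrow> w \<noteq> [] \<and>
     (\<forall>m. 0 < m \<and> m < length w \<longrightarrow>
        (fst (w ! m) - fst (w ! (m - 1)), snd (w ! m) - snd (w ! (m - 1))) \<in> A)"

text \<open>Bridges of length n (a walk of length n is a list of n+1 points).\<close>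
definition bridges :: "(int \<times> int) set \<Rightarrow> nat \<Rightarrow> (int \<times> int) list set" where
  "bridges A n = {w. n \<ge> 1 \<and> length w = n + 1 \<and> is_walk A w \<and> w ! 0 = (0, 0) \<and>
      w ! n \<in> halfline \<and> (\<forall>m. 1 \<le> m \<and> m \<le> n - 1 \<longrightarrow> w ! m \<notin> halfline)}"

definition bridge_gf :: "(int \<times> int) set \<Rightarrow> real fls fps" where
  "bridge_gf A = Abs_fps (\<lambda>n. \<Sum>w\<in>bridges A n. fls_X_intpow (fst (w ! n)))"

definition A0 :: "(int \<times> int) set \<Rightarrow> real fls" where
  "A0 A = (\<Sum>p\<in>{p\<in>A. snd p = 0}. fls_X_intpow (fst p))"

definition A1 :: "(int \<times> int) set \<Rightarrow> real fls" where
  "A1 A = (\<Sum>p\<in>{p\<in>A. snd p = 1}. fls_X_intpow (fst p))"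

definition delta :: "(int \<times> int) set \<Rightarrow> real fls fps" where
  "delta A = (1 - fps_X * fps_const (A0 A))\<^sup>2 - 4 * fps_X\<^sup>2 * (fps_const (A1 A))\<^sup>2"

definition is_real_const :: "real fls \<Rightarrow> bool" where
  "is_real_const c \<longleftrightarrow> (\<forall>k. fls_nth c k \<noteq> 0 \<longrightarrow> k = 0)"

definition is_poly_x :: "real fls \<Rightarrow> bool" where
  "is_poly_x c \<longleftrightarrow> finite {k. fls_nth c k \<noteq> 0} \<and> (\<forall>k. fls_nth c k \<noteq> 0 \<longrightarrow> k \<ge> 0)"

definition is_poly_xbar :: "real fls \<Rightarrow> bool" where
  "is_poly_xbar c \<longleftrightarrow> finite {k. fls_nth c k \<noteq> 0} \<and> (\<forall>k. fls_nth c k \<noteq> 0 \<longrightarrow> k \<le> 0)"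

definition canonical_factorization ::
  "(int \<times> int) set \<Rightarrow> real fls fps \<Rightarrow> real fls fps \<Rightarrow> real fls fps \<Rightarrow> bool" where
  "canonical_factorization A D Dx Dxb \<longleftrightarrow>
     delta A = D * Dx * Dxb \<and>
     (\<forall>n. is_real_const (D $ n)) \<and> (\<forall>n. is_poly_x (Dx $ n)) \<and> (\<forall>n. is_poly_xbar (Dxb $ n)) \<and>
     D $ 0 = 1 \<and>
     (\<forall>n. fls_nth (Dx $ n) 0 = (if n = 0 then 1 else 0)) \<and>
     (\<forall>n. fls_nth (Dxb $ n) 0 = (if n = 0 then 1 else 0)) \<and>
     Dx $ 0 = 1 \<and> Dxb $ 0 = 1"

definition fps_sqrt1 :: "real fls fps \<Rightarrow> real fls fps" where
  "fps_sqrt1 f = (THE s. s $ 0 = 1 \<and> s\<^sup>2 = f)"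

end

theory Submission
  imports Defs
begin
unbundle fps_syntax


definition nonpos :: "real fls \<Rightarrow> bool" where "nonpos f \<longleftrightarrow> (\<forall>k>0. f $$ k = 0)"
definition geq :: "int \<Rightarrow> real fls \<Rightarrow> bool" where "geq a f \<longleftrightarrow> (\<forall>k<a. f $$ k = 0)"

lemma geq_mult: assumes "geq a f" "geq b g" shows "geq (a+b) (f*g)"
proof (cases "f = 0 \<or> g = 0")
  case True thus ?thesis by (auto simp: geq_def)
next
  case False
  then have "a \<le> fls_subdegree f" "b \<le> fls_subdegree g" using assms by (auto simp: geq_def intro!: fls_subdegree_geI)
  thus ?thesis by (auto simp: geq_def intro!: fls_times_nth_eq0)
qed

lemma geq_add: "geq a f \<Longrightarrow> geq a g \<Longrightarrow> geq a (f+g)" by (simp add: geq_def)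
lemma geq_diff: "geq a f \<Longrightarrow> geq a g \<Longrightarrow> geq a (f-g)" by (simp add: geq_def)
lemma geq_uminus: "geq a f \<Longrightarrow> geq a (-f)" by (simp add: geq_def)
lemma geq_zero[simp]: "geq a 0" by (simp add: geq_def)
lemma geq_mono: "geq a f \<Longrightarrow> b \<le> a \<Longrightarrow> geq b f" by (simp add: geq_def)
lemma geq_sum: "(\<And>i. i \<in> S \<Longrightarrow> geq a (f i)) \<Longrightarrow> geq a (\<Sum>i\<in>S. f i)"
  by (induction S rule: infinite_finite_induct) (auto intro: geq_add)
lemma geq_one: "geq 0 1" by (simp add: geq_def)
lemma geq_intpow: "a \<le> i \<Longrightarrow> geq a (fls_X_intpow i)" by (simp add: geq_def)

lemma nonpos_mult: assumes "nonpos f" "nonpos g" shows "nonpos (f*g)"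
  unfolding nonpos_def
proof (intro allI impI)
  fix n :: int assume n: "n > 0"
  show "(f*g) $$ n = 0" unfolding fls_times_nth(2)
  proof (rule sum.neutral, intro ballI)
    fix i assume "i \<in> {fls_subdegree f..n - fls_subdegree g}"
    show "f $$ i * g $$ (n - i) = 0"
    proof (cases "i > 0")
      case True thus ?thesis using assms by (simp add: nonpos_def)
    next
      case False then have "n - i > 0" using n by simp
      thus ?thesis using assms by (simp add: nonpos_def)
    qed
  qed
qed
lemma nonpos_add: "nonpos f \<Longrightarrow> nonpos g \<Longrightarrow> nonpos (f+g)" by (simp add: nonpos_def)
lemma nonpos_diff: "nonpos f \<Longrightarrow> nonpos g \<Longrightarrow> nonpos (f-g)" by (simp add: nonpos_def)
lemma nonpos_zero[simp]: "nonpos 0" by (simp add: nonpos_def)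
lemma nonpos_one[simp]: "nonpos 1" by (simp add: nonpos_def)
lemma nonpos_sum: "(\<And>i. i \<in> S \<Longrightarrow> nonpos (f i)) \<Longrightarrow> nonpos (\<Sum>i\<in>S. f i)"
  by (induction S rule: infinite_finite_induct) (auto intro: nonpos_add)
lemma nonpos_intpow: "i \<le> 0 \<Longrightarrow> nonpos (fls_X_intpow i)" by (simp add: nonpos_def)

lemma fps_nonpos_mult: assumes "\<And>n. nonpos (f$n)" "\<And>n. nonpos (g$n)" shows "nonpos ((f*g)$n)"
  unfolding fps_mult_nth by (intro nonpos_sum nonpos_mult assms)

lemma sum_shift_aux: "(\<Sum>x = 0..m. g (Suc x)) = g (Suc m) + (\<Sum>i = 1..m. (g i :: 'a::comm_monoid_add))"
  by (induction m) (auto simp: sum.cl_ivl_Suc add_ac)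

lemma uq:
  fixes L P R Q :: "real fls fps"
  assumes eq: "L * P = R * Q"
    and L: "\<And>n. nonpos (L$n)" and R: "\<And>n. nonpos (R$n)"
    and P: "\<And>n. geq 0 (P$n)" and Q: "\<And>n. geq 0 (Q$n)"
    and L0: "L$0 = 1" and R0: "R$0 = 1" and P0: "P$0 = 1" and Q0: "Q$0 = 1"
    and P1: "\<And>n. n \<ge> 1 \<Longrightarrow> P$n $$ 0 = 0" and Q1: "\<And>n. n \<ge> 1 \<Longrightarrow> Q$n $$ 0 = 0"
  shows "L = R"
proof -
  have "L$n = R$n \<and> P$n = Q$n" for n
  proof (induction n rule: less_induct)
    case (less n)
    show ?case
    proof (cases n)
      case 0 thus ?thesis using L0 R0 P0 Q0 by simp
    next
      case (Suc m)
      have mid: "(\<Sum>i=1..m. L$i * P$(Suc m - i)) = (\<Sum>i=1..m. R$i * Q$(Suc m - i))"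
        using less Suc by (intro sum.cong) auto
      have "(L*P)$(Suc m) = (R*Q)$(Suc m)" using eq by simp
      then have "L$0 * P$(Suc m) + (L$(Suc m) * P$0 + (\<Sum>i=1..m. L$i * P$(Suc m - i)))
          = R$0 * Q$(Suc m) + (R$(Suc m) * Q$0 + (\<Sum>i=1..m. R$i * Q$(Suc m - i)))"
        unfolding fps_mult_nth sum.atLeast0_atMost_Suc_shift
        using sum_shift_aux[of "\<lambda>i. L$i * P$(Suc m - i)" m] sum_shift_aux[of "\<lambda>i. R$i * Q$(Suc m - i)" m]
        by simp
      then have e: "L$(Suc m) - R$(Suc m) = Q$(Suc m) - P$(Suc m)"
        using L0 R0 P0 Q0 mid by (simp add: algebra_simps)
      define d where "d = L$(Suc m) - R$(Suc m)"
      have "d = 0" unfolding fls_eq_iff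
      proof
        fix k :: int
        show "d $$ k = 0 $$ k"
        proof (cases k "0::int" rule: linorder_cases)
          case less thus ?thesis using P[of "Suc m"] Q[of "Suc m"] e by (simp add: d_def geq_def)
        next
          case equal thus ?thesis using P1[of "Suc m"] Q1[of "Suc m"] e by (simp add: d_def)
        next
          case greater thus ?thesis using L[of "Suc m"] R[of "Suc m"] by (simp add: d_def nonpos_def)
        qed
      qed
      thus ?thesis using e Suc by (simp add: d_def)
    qed
  qed
  thus ?thesis by (simp add: fps_eq_iff)
qed

definition posf :: "real fls fps \<Rightarrow> bool" where
  "posf U \<longleftrightarrow> U$0 = 1 \<and> (\<forall>n\<ge>1. geq 1 (U$n))"

lemma posf_geq0: "posf U \<Longrightarrow> geq 0 (U$n)"
  by (cases "n = 0") (auto simp: posf_def geq_def)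

lemma posf_mult: assumes "posf U" "posf V" shows "posf (U*V)"
  unfolding posf_def
proof (intro conjI allI impI)
  show "(U*V)$0 = 1" using assms by (simp add: posf_def)
  fix n :: nat assume n: "n \<ge> 1"
  show "geq 1 ((U*V)$n)" unfolding fps_mult_nth
  proof (rule geq_sum)
    fix i assume i: "i \<in> {0..n}"
    show "geq 1 (U$i * V$(n-i))"
    proof (cases "i \<ge> 1")
      case True
      then have "geq (1+0) (U$i * V$(n-i))" using assms by (intro geq_mult posf_geq0) (auto simp: posf_def)
      thus ?thesis by simp
    next
      case False
      then have "geq (0+1) (U$i * V$(n-i))" using assms n by (intro geq_mult posf_geq0) (auto simp: posf_def)
      thus ?thesis by simp
    qed
  qed
qed

lemma posf_inverse: assumes "U$0 = 1" "\<And>n. n \<ge> 1 \<Longrightarrow> geq 1 (U$n)" shows "posf (inverse U)"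
proof -
  define V where "V = inverse U"
  have VU: "V * U = 1" unfolding V_def using assms by (intro inverse_mult_eq_1) simp
  have V0: "V$0 = 1" unfolding V_def using assms by simp
  have "n \<ge> 1 \<longrightarrow> geq 1 (V$n)" for n
  proof (induction n rule: less_induct)
    case (less n)
    show ?case
    proof (cases n)
      case 0 thus ?thesis by simp
    next
      case (Suc m)
      have "(V*U)$(Suc m) = 0" using VU by simp
      then have "(\<Sum>i=0..m. V$i * U$(Suc m - i)) + V$(Suc m) = 0"
        unfolding fps_mult_nth sum.atLeast0_atMost_Suc using assms by simp
      then have e: "V$(Suc m) = - (\<Sum>i=0..m. V$i * U$(Suc m - i))" by (simp add: eq_neg_iff_add_eq_0 add.commute)
      have "geq 1 (\<Sum>i=0..m. V$i * U$(Suc m - i))"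
      proof (rule geq_sum)
        fix i assume i: "i \<in> {0..m}"
        have "geq 0 (V$i)" using less Suc i V0 by (cases "i = 0") (auto simp: geq_def intro: geq_mono)
        moreover have "geq 1 (U$(Suc m - i))" using assms i by auto
        ultimately have "geq (0+1) (V$i * U$(Suc m - i))" by (intro geq_mult)
        thus "geq 1 (V$i * U$(Suc m - i))" by simp
      qed
      thus ?thesis using e Suc by (simp add: geq_uminus)
    qed
  qed
  thus ?thesis using V0 unfolding posf_def V_def by simp
qed

lemma sqrt1_eq: assumes "r$0 = 1" shows "fps_sqrt1 (r^2) = (r::real fls fps)"
  unfolding fps_sqrt1_def
proof (rule the_equality)
  show "r$0 = 1 \<and> r^2 = r^2" using assms by simp
  fix s assume s: "s$0 = 1 \<and> s^2 = r^2"
  have "(s - r) * (s + r) = 0" using s by (simp add: power2_eq_square algebra_simps)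
  moreover have "(s + r) \<noteq> 0"
  proof
    assume "s + r = 0"
    then have "(s+r)$0 = 0" by simp
    thus False using s assms by simp
  qed
  ultimately show "s = r" by simp
qed

lemma rec_zero:
  fixes G :: "nat \<Rightarrow> real fls fps"
  assumes G0: "G 0 = 0"
    and rec: "\<And>k. k \<ge> 1 \<Longrightarrow> G k = fps_X * (fps_const a * G k + fps_const b * G (k-1) + fps_const b * G (k+1))"
  shows "G k = 0"
proof -
  have "\<forall>k. G k $ n = 0" for n
  proof (induction n)
    case 0
    show ?case
    proof
      fix k show "G k $ 0 = 0"
        by (cases "k = 0") (simp add: G0, subst rec, auto)
    qed
  next
    case (Suc n)
    show ?case
    proof
      fix k show "G k $ Suc n = 0"
        by (cases "k = 0") (simp add: G0, subst rec, auto simp: Suc)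
    qed
  qed
  thus ?thesis by (simp add: fps_eq_iff)
qed

lemma root_exists:
  fixes a b :: "real fls" and S :: "real fls fps"
  assumes b: "b \<noteq> 0" and S0: "S$0 = 1"
    and S2: "S^2 = (1 - fps_X * fps_const a)^2 - 4*fps_X^2*(fps_const b)^2"
  shows "\<exists>Y. Y = fps_X*(fps_const a * Y + fps_const b + fps_const b * Y^2) \<and>
             fps_X * (fps_const a + 2*fps_const b * Y) = 1 - S"
proof -
  define N where "N = 1 - fps_X * fps_const a - S"
  have N0: "N$0 = 0" using S0 by (simp add: N_def)
  have XN: "fps_X * fps_shift 1 N = N"
    by (rule fps_ext) (auto simp: N0 fps_X_mult_nth)
  define Y where "Y = fps_shift 1 N * fps_const (inverse (2*b))"
  have "2 * fps_X * fps_const b * Y = fps_X * fps_shift 1 N * (fps_const (2*b) * fps_const (inverse (2*b)))"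
    by (simp add: Y_def fps_const_mult[symmetric] algebra_simps del: fps_const_mult)
  also have "\<dots> = N" using b XN by simp
  finally have NY: "N = 2 * fps_X * fps_const b * Y" by simp
  have "S = 1 - fps_X * fps_const a - N" by (simp add: N_def)
  then have SY: "S = 1 - fps_X * fps_const a - 2 * fps_X * fps_const b * Y" using NY by simp
  define E where "E = Y - fps_X*(fps_const a * Y + fps_const b + fps_const b * Y^2)"
  have "2*(2*fps_X*fps_const b)*E = (1 - fps_X * fps_const a)^2 - 4*fps_X^2*(fps_const b)^2 - S^2"
    unfolding E_def SY by (simp add: power2_eq_square algebra_simps del: fps_const_mult)
  then have "2*(2*fps_X*fps_const b)*E = 0" using S2 by simp
  moreover have "2*(2*fps_X*fps_const b) \<noteq> (0 :: real fls fps)" using b by simp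
  ultimately have "E = 0" by simp
  moreover have "fps_X * (fps_const a + 2*fps_const b * Y) = 1 - S" using SY by (simp add: algebra_simps)
  ultimately show ?thesis unfolding E_def by auto
qed




definition padd :: "int \<times> int \<Rightarrow> int \<times> int \<Rightarrow> int \<times> int" where
  "padd p s = (fst p + fst s, snd p + snd s)"

definition Wn :: "(int \<times> int) set \<Rightarrow> nat \<Rightarrow> (int \<times> int) list set" where
  "Wn A n = {w. length w = Suc n \<and> is_walk A w \<and> w!0 = (0,0) \<and> (\<forall>m. 1 \<le> m \<and> m \<le> n \<longrightarrow> w!m \<notin> halfline)}"

definition extw :: "(int \<times> int) list \<times> (int \<times> int) \<Rightarrow> (int \<times> int) list" where
  "extw ws = fst ws @ [padd (last (fst ws)) (snd ws)]"

lemma is_walk_snoc: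
  assumes "w \<noteq> []"
  shows "is_walk A (w @ [p]) \<longleftrightarrow> is_walk A w \<and> (fst p - fst (last w), snd p - snd (last w)) \<in> A"
proof
  assume h: "is_walk A (w@[p])"
  have "is_walk A w" unfolding is_walk_def
  proof (intro conjI allI impI)
    show "w \<noteq> []" by fact
    fix m assume m: "0 < m \<and> m < length w"
    with h[unfolded is_walk_def, THEN conjunct2, rule_format, of m]
    show "(fst (w ! m) - fst (w ! (m - 1)), snd (w ! m) - snd (w ! (m - 1))) \<in> A"
      by (simp add: nth_append less_imp_diff_less)
  qed
  moreover have "(fst p - fst (last w), snd p - snd (last w)) \<in> A"
    using h[unfolded is_walk_def, THEN conjunct2, rule_format, of "length w"] assms
    by (simp add: nth_append last_conv_nth)
  ultimately show "is_walk A w \<and> (fst p - fst (last w), snd p - snd (last w)) \<in> A" by simp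
next
  assume h: "is_walk A w \<and> (fst p - fst (last w), snd p - snd (last w)) \<in> A"
  show "is_walk A (w@[p])" unfolding is_walk_def
  proof (intro conjI allI impI)
    show "w@[p] \<noteq> []" by simp
    fix m assume m: "0 < m \<and> m < length (w@[p])"
    show "(fst ((w@[p]) ! m) - fst ((w@[p]) ! (m - 1)), snd ((w@[p]) ! m) - snd ((w@[p]) ! (m - 1))) \<in> A"
    proof (cases "m < length w")
      case True with h m show ?thesis by (simp add: nth_append is_walk_def less_imp_diff_less)
    next
      case False then have "m = length w" using m by simp
      with h assms show ?thesis by (simp add: nth_append last_conv_nth)
    qed
  qed
qed

lemma Wn_nonempty: "w \<in> Wn A n \<Longrightarrow> w \<noteq> []" by (auto simp: Wn_def)
lemma Wn_last: assumes "w \<in> Wn A n" shows "last w = w ! n"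
proof -
  have "length w = Suc n" using assms by (auto simp: Wn_def)
  moreover then have "w \<noteq> []" by auto
  ultimately show ?thesis by (simp add: last_conv_nth)
qed

lemma Wn_0: "Wn A 0 = {[(0,0)]}"
proof -
  have "w \<in> Wn A 0 \<longleftrightarrow> w = [(0,0)]" for w
  proof
    assume "w \<in> Wn A 0"
    then have "length w = 1" "w!0 = (0,0)" by (auto simp: Wn_def)
    thus "w = [(0,0)]" by (cases w) auto
  next
    assume "w = [(0,0)]" thus "w \<in> Wn A 0" by (simp add: Wn_def is_walk_def)
  qed
  thus ?thesis by auto
qed

lemma snoc_char:
  "(length v = Suc (Suc n) \<and> is_walk A v \<and> v!0 = (0,0) \<and> (\<forall>m. 1\<le>m \<and> m\<le>n \<longrightarrow> v!m \<notin> halfline))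
   \<longleftrightarrow> (\<exists>w s. w \<in> Wn A n \<and> s \<in> A \<and> v = extw (w, s))"
proof
  assume h: "length v = Suc (Suc n) \<and> is_walk A v \<and> v!0 = (0,0) \<and> (\<forall>m. 1\<le>m \<and> m\<le>n \<longrightarrow> v!m \<notin> halfline)"
  define w where "w = butlast v"
  define p where "p = last v"
  have "v \<noteq> []" using h by auto
  then have v: "v = w @ [p]" by (simp add: w_def p_def)
  have lw: "length w = Suc n" using h by (simp add: w_def)
  then have wne: "w \<noteq> []" by auto
  define s where "s = (fst p - fst (last w), snd p - snd (last w))"
  have ws: "is_walk A w" "s \<in> A" using h is_walk_snoc[OF wne, of A p] v s_def by auto
  have "w \<in> Wn A n" unfolding Wn_def
  proof (intro CollectI conjI allI impI)
    show "length w = Suc n" by fact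
    show "is_walk A w" by fact
    show "w!0 = (0,0)" using h v lw by (simp add: nth_append)
    fix m assume m: "1 \<le> m \<and> m \<le> n"
    then show "w!m \<notin> halfline" using h v lw by (auto simp: nth_append)
  qed
  moreover have "v = extw (w, s)" using v by (simp add: extw_def padd_def s_def)
  ultimately show "\<exists>w s. w \<in> Wn A n \<and> s \<in> A \<and> v = extw (w, s)" using ws by blast
next
  assume "\<exists>w s. w \<in> Wn A n \<and> s \<in> A \<and> v = extw (w, s)"
  then obtain w s where w: "w \<in> Wn A n" and s: "s \<in> A" and v: "v = extw (w, s)" by blast
  have wne: "w \<noteq> []" and lw: "length w = Suc n" using w by (auto simp: Wn_def)
  have "is_walk A v" using v is_walk_snoc[OF wne] w s by (simp add: extw_def padd_def Wn_def)
  moreover have "\<forall>m. 1\<le>m \<and> m\<le>n \<longrightarrow> v!m \<notin> halfline" using w v lw by (auto simp: extw_def nth_append Wn_def)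
  ultimately show "length v = Suc (Suc n) \<and> is_walk A v \<and> v!0 = (0,0) \<and> (\<forall>m. 1\<le>m \<and> m\<le>n \<longrightarrow> v!m \<notin> halfline)"
    using v lw w by (simp add: extw_def nth_append Wn_def)
qed

lemma extw_nth: "w \<in> Wn A n \<Longrightarrow> extw (w, s) ! Suc n = padd (last w) s"
  by (auto simp: extw_def Wn_def nth_append)

lemma extw_last: "last (extw (w, s)) = padd (last w) s"
  by (simp add: extw_def)

lemma Wn_Suc: "Wn A (Suc n) = extw ` {ws. fst ws \<in> Wn A n \<and> snd ws \<in> A \<and> padd (last (fst ws)) (snd ws) \<notin> halfline}"
proof -
  have h0: "v \<in> Wn A (Suc n) \<longleftrightarrow> (length v = Suc (Suc n) \<and> is_walk A v \<and> v!0 = (0,0) \<and> (\<forall>m. 1\<le>m \<and> m\<le>n \<longrightarrow> v!m \<notin> halfline)) \<and> v ! Suc n \<notin> halfline" for v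
    unfolding Wn_def by (auto simp: le_Suc_eq)
  have eq: "v \<in> Wn A (Suc n) \<longleftrightarrow> (\<exists>w s. w \<in> Wn A n \<and> s \<in> A \<and> v = extw (w, s) \<and> padd (last w) s \<notin> halfline)" for v
    unfolding h0 snoc_char by (auto simp: extw_nth) blast+
  show ?thesis unfolding set_eq_iff eq image_iff mem_Collect_eq by fastforce
qed

lemma bridges_Suc: "bridges A (Suc n) = extw ` {ws. fst ws \<in> Wn A n \<and> snd ws \<in> A \<and> padd (last (fst ws)) (snd ws) \<in> halfline}"
proof -
  have h0: "v \<in> bridges A (Suc n) \<longleftrightarrow> (length v = Suc (Suc n) \<and> is_walk A v \<and> v!0 = (0,0) \<and> (\<forall>m. 1\<le>m \<and> m\<le>n \<longrightarrow> v!m \<notin> halfline)) \<and> v ! Suc n \<in> halfline" for v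
    unfolding bridges_def by auto
  have eq: "v \<in> bridges A (Suc n) \<longleftrightarrow> (\<exists>w s. w \<in> Wn A n \<and> s \<in> A \<and> v = extw (w, s) \<and> padd (last w) s \<in> halfline)" for v
    unfolding h0 snoc_char by (auto simp: extw_nth) blast+
  show ?thesis unfolding set_eq_iff eq image_iff mem_Collect_eq by fastforce
qed

lemma bridges_0: "bridges A 0 = {}" by (simp add: bridges_def)

lemma inj_extw: "inj extw"
proof (rule injI)
  fix x y assume "extw x = extw y"
  then have "fst x = fst y" "padd (last (fst x)) (snd x) = padd (last (fst y)) (snd y)" by (auto simp: extw_def)
  thus "x = y" by (cases x, cases y) (auto simp: padd_def prod_eq_iff)
qed

lemma finite_Wn: assumes "finite A" shows "finite (Wn A n)"
proof (induction n)
  case 0 thus ?case by (simp add: Wn_0)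
next
  case (Suc n)
  have "{ws. fst ws \<in> Wn A n \<and> snd ws \<in> A \<and> padd (last (fst ws)) (snd ws) \<notin> halfline} \<subseteq> Wn A n \<times> A" by auto
  then have "finite {ws. fst ws \<in> Wn A n \<and> snd ws \<in> A \<and> padd (last (fst ws)) (snd ws) \<notin> halfline}"
    using Suc assms by (meson finite_SigmaI finite_subset)
  thus ?case by (simp add: Wn_Suc)
qed




definition Fh :: "(int \<times> int) set \<Rightarrow> nat \<Rightarrow> int \<Rightarrow> real fls" where
  "Fh A n j = (\<Sum>w\<in>{w\<in>Wn A n. snd (last w) = j}. fls_X_intpow (fst (last w)))"

definition Am1 :: "(int \<times> int) set \<Rightarrow> real fls" where
  "Am1 A = (\<Sum>p\<in>{p\<in>A. snd p = -1}. fls_X_intpow (fst p))"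

lemma sum_extw:
  assumes fin: "finite A"
  shows "(\<Sum>v\<in>extw ` {ws. fst ws \<in> Wn A n \<and> snd ws \<in> A \<and> Q (padd (last (fst ws)) (snd ws))}. g (last v))
       = (\<Sum>w\<in>Wn A n. \<Sum>s\<in>A. if Q (padd (last w) s) then g (padd (last w) s) else 0)"
proof -
  have S: "{ws. fst ws \<in> Wn A n \<and> snd ws \<in> A \<and> Q (padd (last (fst ws)) (snd ws))}
      = Sigma (Wn A n) (\<lambda>w. {s\<in>A. Q (padd (last w) s)})" by auto
  have "(\<Sum>v\<in>extw ` {ws. fst ws \<in> Wn A n \<and> snd ws \<in> A \<and> Q (padd (last (fst ws)) (snd ws))}. g (last v))
      = (\<Sum>ws\<in>Sigma (Wn A n) (\<lambda>w. {s\<in>A. Q (padd (last w) s)}). g (last (extw ws)))"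
    unfolding S using inj_extw by (subst sum.reindex) (auto intro: inj_on_subset)
  also have "(\<Sum>ws\<in>Sigma (Wn A n) (\<lambda>w. {s\<in>A. Q (padd (last w) s)}). g (last (extw ws)))
      = (\<Sum>w\<in>Wn A n. \<Sum>s\<in>{s\<in>A. Q (padd (last w) s)}. g (padd (last w) s))"
    (is "?L = ?R")
  proof -
    have "?L = (\<Sum>(w,s)\<in>Sigma (Wn A n) (\<lambda>w. {s\<in>A. Q (padd (last w) s)}). g (padd (last w) s))"
      by (intro sum.cong refl) (auto simp: extw_last)
    also have "\<dots> = ?R" using fin finite_Wn[OF fin] by (intro sum.Sigma[symmetric]) auto
    finally show ?thesis .
  qed
  also have "\<dots> = (\<Sum>w\<in>Wn A n. \<Sum>s\<in>A. if Q (padd (last w) s) then g (padd (last w) s) else 0)"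
    using fin by (simp add: sum.inter_filter)
  finally show ?thesis .
qed

lemma bridge_Suc_sum:
  assumes fin: "finite A"
  shows "bridge_gf A $ Suc n = (\<Sum>w\<in>Wn A n. \<Sum>s\<in>A. if padd (last w) s \<in> halfline then fls_X_intpow (fst (padd (last w) s)) else 0)"
proof -
  have "bridge_gf A $ Suc n = (\<Sum>w\<in>bridges A (Suc n). fls_X_intpow (fst (w ! Suc n)))"
    by (simp add: bridge_gf_def)
  also have "\<dots> = (\<Sum>w\<in>bridges A (Suc n). fls_X_intpow (fst (last w)))"
  proof (rule sum.cong)
    fix w assume "w \<in> bridges A (Suc n)"
    then have "length w = Suc (Suc n)" by (simp add: bridges_def)
    moreover then have "w \<noteq> []" by auto
    ultimately show "fls_X_intpow (fst (w ! Suc n)) = fls_X_intpow (fst (last w))" by (simp add: last_conv_nth)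
  qed simp
  also have "\<dots> = (\<Sum>w\<in>Wn A n. \<Sum>s\<in>A. if padd (last w) s \<in> halfline then fls_X_intpow (fst (padd (last w) s)) else 0)"
    unfolding bridges_Suc by (rule sum_extw[OF fin])
  finally show ?thesis .
qed

lemma Fh_Suc_sum:
  assumes fin: "finite A"
  shows "Fh A (Suc n) j = (\<Sum>w\<in>Wn A n. \<Sum>s\<in>A. if padd (last w) s \<notin> halfline \<and> snd (padd (last w) s) = j then fls_X_intpow (fst (padd (last w) s)) else 0)"
proof -
  have "Fh A (Suc n) j = (\<Sum>w\<in>Wn A (Suc n). if snd (last w) = j then fls_X_intpow (fst (last w)) else 0)"
    unfolding Fh_def using finite_Wn[OF fin] by (simp add: sum.inter_filter)
  also have "\<dots> = (\<Sum>w\<in>Wn A n. \<Sum>s\<in>A. if padd (last w) s \<notin> halfline then (if snd (padd (last w) s) = j then fls_X_intpow (fst (padd (last w) s)) else 0) else 0)"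
    unfolding Wn_Suc by (rule sum_extw[OF fin])
  finally show ?thesis by (simp add: if_if_eq_conj conj_commute)
qed

lemma halfline_snd: "p \<in> halfline \<Longrightarrow> snd p = 0" by (auto simp: halfline_def)

lemma Fh_rec1:
  assumes fin: "finite A"
  shows "Fh A (Suc n) j + (if j = 0 then bridge_gf A $ Suc n else 0)
     = (\<Sum>w\<in>Wn A n. \<Sum>s\<in>A. if snd (last w) + snd s = j then fls_X_intpow (fst (last w)) * fls_X_intpow (fst s) else 0)"
proof (cases "j = 0")
  case True
  have "Fh A (Suc n) j + (if j = 0 then bridge_gf A $ Suc n else 0)
      = (\<Sum>w\<in>Wn A n. \<Sum>s\<in>A. (if padd (last w) s \<notin> halfline \<and> snd (padd (last w) s) = j then fls_X_intpow (fst (padd (last w) s)) else 0)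
           + (if padd (last w) s \<in> halfline then fls_X_intpow (fst (padd (last w) s)) else 0))"
    using True by (simp add: Fh_Suc_sum[OF fin] bridge_Suc_sum[OF fin] sum.distrib)
  also have "\<dots> = (\<Sum>w\<in>Wn A n. \<Sum>s\<in>A. if snd (last w) + snd s = j then fls_X_intpow (fst (last w)) * fls_X_intpow (fst s) else 0)"
    using True by (intro sum.cong refl) (auto simp: padd_def fls_X_intpow_times_fls_X_intpow dest: halfline_snd)
  finally show ?thesis .
next
  case False
  have "Fh A (Suc n) j + (if j = 0 then bridge_gf A $ Suc n else 0)
      = (\<Sum>w\<in>Wn A n. \<Sum>s\<in>A. (if padd (last w) s \<notin> halfline \<and> snd (padd (last w) s) = j then fls_X_intpow (fst (padd (last w) s)) else 0))"
    using False by (simp add: Fh_Suc_sum[OF fin])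
  also have "\<dots> = (\<Sum>w\<in>Wn A n. \<Sum>s\<in>A. if snd (last w) + snd s = j then fls_X_intpow (fst (last w)) * fls_X_intpow (fst s) else 0)"
    using False by (intro sum.cong refl) (auto simp: padd_def fls_X_intpow_times_fls_X_intpow dest: halfline_snd)
  finally show ?thesis .
qed

lemma Fh_rec2:
  assumes fin: "finite A"
  shows "(\<Sum>w\<in>Wn A n. \<Sum>s\<in>A. if snd (last w) + snd s = j then fls_X_intpow (fst (last w)) * fls_X_intpow (fst s) else 0)
     = (\<Sum>s\<in>A. fls_X_intpow (fst s) * Fh A n (j - snd s))"
proof -
  have "(\<Sum>w\<in>Wn A n. \<Sum>s\<in>A. if snd (last w) + snd s = j then fls_X_intpow (fst (last w)) * fls_X_intpow (fst s) else 0)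
      = (\<Sum>s\<in>A. \<Sum>w\<in>Wn A n. if snd (last w) + snd s = j then fls_X_intpow (fst (last w)) * fls_X_intpow (fst s) else 0)"
    by (rule sum.swap)
  also have "\<dots> = (\<Sum>s\<in>A. fls_X_intpow (fst s) * (\<Sum>w\<in>Wn A n. if snd (last w) = j - snd s then (fls_X_intpow (fst (last w)) :: real fls) else 0))"
    apply (intro sum.cong refl)
    apply (subst sum_distrib_left)
    apply (intro sum.cong refl)
    apply (auto simp: mult.commute eq_diff_eq)
    done
  also have "\<dots> = (\<Sum>s\<in>A. fls_X_intpow (fst s) * Fh A n (j - snd s))"
    unfolding Fh_def using finite_Wn[OF fin] by (simp add: sum.inter_filter)
  finally show ?thesis .
qed

lemma split_heights:
  assumes fin: "finite A" and h: "\<And>i j. (i, j) \<in> A \<Longrightarrow> \<bar>j\<bar> \<le> 1"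
  shows "(\<Sum>s\<in>A. fls_X_intpow (fst s) * g (j - snd s))
     = A0 A * g j + A1 A * g (j - 1) + Am1 A * g (j + 1)"
proof -
  have "A0 A * g j + A1 A * g (j - 1) + Am1 A * g (j + 1)
     = (\<Sum>s\<in>A. (if snd s = 0 then fls_X_intpow (fst s) * g (j - snd s) else 0)
          + (if snd s = 1 then fls_X_intpow (fst s) * g (j - snd s) else 0)
          + (if snd s = -1 then fls_X_intpow (fst s) * g (j - snd s) else 0))"
    unfolding A0_def A1_def Am1_def sum_distrib_right sum.distrib
    using fin by (simp add: sum.inter_filter[symmetric])
  also have "\<dots> = (\<Sum>s\<in>A. fls_X_intpow (fst s) * g (j - snd s))"
  proof (rule sum.cong)
    fix s assume "s \<in> A"
    then have "snd s = 0 \<or> snd s = 1 \<or> snd s = -1" using h[of "fst s" "snd s"] by auto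
    thus "(if snd s = 0 then fls_X_intpow (fst s) * g (j - snd s) else 0)
          + (if snd s = 1 then fls_X_intpow (fst s) * g (j - snd s) else 0)
          + (if snd s = -1 then fls_X_intpow (fst s) * g (j - snd s) else 0) = fls_X_intpow (fst s) * g (j - snd s)"
      by auto
  qed simp
  finally show ?thesis by simp
qed

lemma Am1_eq:
  assumes "\<And>i j. (i, j) \<in> A \<Longrightarrow> (i, - j) \<in> A"
  shows "Am1 A = A1 A"
proof -
  have h1: "\<And>a. (a,-1)\<in>A \<Longrightarrow> (a,1)\<in>A" using assms[of _ "-1"] by simp
  have h2: "\<And>a. (a,1)\<in>A \<Longrightarrow> (a,-1)\<in>A" using assms[of _ "1"] by simp
  show ?thesis unfolding Am1_def A1_def
  by (rule sum.reindex_bij_witness[where i = "\<lambda>p. (fst p, - snd p)" and j = "\<lambda>p. (fst p, - snd p)"])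
     (auto intro: h1 h2)
qed

lemma Fh_0: "Fh A 0 j = (if j = 0 then 1 else 0)"
proof -
  have "{w\<in>Wn A 0. snd (last w) = j} = (if j = 0 then {[(0,0)]} else {})" by (auto simp: Wn_0)
  thus ?thesis by (simp add: Fh_def)
qed

lemma Fh_rec:
  assumes fin: "finite A" and h: "\<And>i j. (i, j) \<in> A \<Longrightarrow> \<bar>j\<bar> \<le> 1"
  shows "Fh A (Suc n) j + (if j = 0 then bridge_gf A $ Suc n else 0)
     = A0 A * Fh A n j + A1 A * Fh A n (j - 1) + Am1 A * Fh A n (j + 1)"
  unfolding Fh_rec1[OF fin] Fh_rec2[OF fin] by (rule split_heights[OF fin h])

lemma Fh_pos: assumes "n \<ge> 1" shows "geq 1 (Fh A n 0)"
  unfolding Fh_def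
proof (rule geq_sum)
  fix w assume w: "w \<in> {w \<in> Wn A n. snd (last w) = 0}"
  then have "last w \<notin> halfline" using assms Wn_last[of w A n] by (auto simp: Wn_def)
  then have "fst (last w) \<ge> 1" using w by (cases "last w") (auto simp: halfline_def)
  thus "geq 1 (fls_X_intpow (fst (last w)))" by (rule geq_intpow)
qed

lemma bridge_nonpos: "nonpos (bridge_gf A $ n)"
  unfolding bridge_gf_def
proof (simp, rule nonpos_sum)
  fix w assume "w \<in> bridges A n"
  then have "w ! n \<in> halfline" by (simp add: bridges_def)
  then have "fst (w ! n) \<le> 0" by (auto simp: halfline_def)
  thus "nonpos (fls_X_intpow (fst (w ! n)))" by (rule nonpos_intpow)
qed

lemma bridge_0: "bridge_gf A $ 0 = 0"
  by (simp add: bridge_gf_def bridges_0)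




lemma FF_rec:
  assumes fin: "finite A" and h: "\<And>i j. (i, j) \<in> A \<Longrightarrow> \<bar>j\<bar> \<le> 1"
    and sym: "\<And>i j. (i, j) \<in> A \<Longrightarrow> (i, - j) \<in> A"
  shows "Abs_fps (\<lambda>n. Fh A n j) + (if j = 0 then bridge_gf A else 0)
    = (if j = 0 then 1 else 0) + fps_X * (fps_const (A0 A) * Abs_fps (\<lambda>n. Fh A n j)
        + fps_const (A1 A) * Abs_fps (\<lambda>n. Fh A n (j-1)) + fps_const (A1 A) * Abs_fps (\<lambda>n. Fh A n (j+1)))"
proof (rule fps_ext)
  fix n show "(Abs_fps (\<lambda>n. Fh A n j) + (if j = 0 then bridge_gf A else 0)) $ n
    = ((if j = 0 then 1 else 0) + fps_X * (fps_const (A0 A) * Abs_fps (\<lambda>n. Fh A n j)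
        + fps_const (A1 A) * Abs_fps (\<lambda>n. Fh A n (j-1)) + fps_const (A1 A) * Abs_fps (\<lambda>n. Fh A n (j+1)))) $ n"
  proof (cases n)
    case 0 thus ?thesis by (simp add: Fh_0 bridge_0)
  next
    case (Suc m)
    have "Fh A (Suc m) j + (if j = 0 then bridge_gf A $ Suc m else 0)
     = A0 A * Fh A m j + A1 A * Fh A m (j - 1) + A1 A * Fh A m (j + 1)"
      using Fh_rec[OF fin h, where n = m and j = j] Am1_eq[OF sym] by simp
    thus ?thesis using Suc by (cases "j = 0") simp_all
  qed
qed

lemma mainTheorem5':
  fixes A :: "(int \<times> int) set" and D Dx Dxb :: "real fls fps"
  assumes "finite A"
    and "\<And>i j. (i, j) \<in> A \<Longrightarrow> (i, - j) \<in> A"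
    and "\<And>i j. (i, j) \<in> A \<Longrightarrow> \<bar>j\<bar> \<le> 1"
    and "A1 A \<noteq> 0"
    and "canonical_factorization A D Dx Dxb"
  shows "bridge_gf A = 1 - fps_sqrt1 (D * Dxb)"
proof -
  note fin = assms(1) and sym = assms(2) and hgt = assms(3) and b0 = assms(4) and cf = assms(5)
  define a where "a = A0 A"
  define b where "b = A1 A"
  define B where "B = bridge_gf A"
  define F where "F j = Abs_fps (\<lambda>n. Fh A n j)" for j
  have rec: "F j + (if j = 0 then B else 0) = (if j = 0 then 1 else 0)
      + fps_X * (fps_const a * F j + fps_const b * F (j-1) + fps_const b * F (j+1))" for j
    unfolding F_def a_def b_def B_def by (rule FF_rec[OF fin hgt sym])
  define S where "S = fps_radical (\<lambda>_ _. 1) 2 (delta A)"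
  have d0: "delta A $ 0 = 1" by (simp add: delta_def power2_eq_square)
  have S2: "S^2 = delta A"
    using power_radical[of "delta A" "\<lambda>_ _. 1" 1] d0 by (simp add: S_def numeral_2_eq_2)
  have S0: "S$0 = 1" by (simp add: S_def)
  have S2': "S^2 = (1 - fps_X * fps_const a)^2 - 4*fps_X^2*(fps_const b)^2"
    using S2 by (simp add: delta_def a_def b_def)
  obtain Y where Y: "Y = fps_X*(fps_const a * Y + fps_const b + fps_const b * Y^2)"
     and YS: "fps_X * (fps_const a + 2*fps_const b * Y) = 1 - S"
    using root_exists[OF _ S0 S2'] b0 unfolding b_def by blast
  have Ypow: "Y^k * F 0 = fps_X*(fps_const a*(Y^k*F 0) + fps_const b*(Y^(k-1)*F 0) + fps_const b*(Y^(k+1)*F 0))"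
    if k: "k \<ge> 1" for k
  proof -
    obtain m where m: "k = Suc m" using k by (cases k) auto
    have "Y^k * F 0 = (Y^m * F 0) * Y" using m by (simp add: algebra_simps)
    also have "\<dots> = (Y^m * F 0) * (fps_X*(fps_const a * Y + fps_const b + fps_const b * Y^2))"
      using arg_cong[where f = "\<lambda>z. (Y^m * F 0) * z", OF Y] .
    also have "\<dots> = fps_X*(fps_const a*(Y^k*F 0) + fps_const b*(Y^(k-1)*F 0) + fps_const b*(Y^(k+1)*F 0))"
      using m by (simp add: algebra_simps power2_eq_square)
    finally show ?thesis .
  qed
  have Gpos: "F (int k) - Y^k * F 0 = 0" for k
  proof -
    define G where "G k = F (int k) - Y^k * F 0" for k
    have "G k = 0"
    proof (rule rec_zero[where a = a and b = b])
      show "G 0 = 0" by (simp add: G_def)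
      fix k :: nat assume k: "k \<ge> 1"
      have e1: "F (int k) = fps_X * (fps_const a * F (int k) + fps_const b * F (int (k-1)) + fps_const b * F (int (k+1)))"
        using rec[of "int k"] k by (simp add: of_nat_diff add.commute[of 1])
      have z1: "F (int k) - fps_X * (fps_const a * F (int k) + fps_const b * F (int (k-1)) + fps_const b * F (int (k+1))) = 0"
        using e1 by simp
      have z2: "Y^k*F 0 - fps_X*(fps_const a*(Y^k*F 0) + fps_const b*(Y^(k-1)*F 0) + fps_const b*(Y^(k+1)*F 0)) = 0"
        using Ypow[OF k] by simp
      have "G k - fps_X * (fps_const a * G k + fps_const b * G (k-1) + fps_const b * G (k+1))
         = (F (int k) - fps_X * (fps_const a * F (int k) + fps_const b * F (int (k-1)) + fps_const b * F (int (k+1))))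
           - (Y^k*F 0 - fps_X*(fps_const a*(Y^k*F 0) + fps_const b*(Y^(k-1)*F 0) + fps_const b*(Y^(k+1)*F 0)))"
        unfolding G_def by (simp add: algebra_simps)
      also have "\<dots> = 0" using z1 z2 by simp
      finally show "G k = fps_X * (fps_const a * G k + fps_const b * G (k-1) + fps_const b * G (k+1))" by simp
    qed
    thus ?thesis by (simp add: G_def)
  qed
  have Gneg: "F (- int k) - Y^k * F 0 = 0" for k
  proof -
    define G where "G k = F (- int k) - Y^k * F 0" for k
    have "G k = 0"
    proof (rule rec_zero[where a = a and b = b])
      show "G 0 = 0" by (simp add: G_def)
      fix k :: nat assume k: "k \<ge> 1"
      have e1: "F (- int k) = fps_X * (fps_const a * F (- int k) + fps_const b * F (- int (k+1)) + fps_const b * F (- int (k-1)))"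
      proof -
        have i1: "- int k - 1 = - int (k+1)" by simp
        have i2: "- int k + 1 = - int (k-1)" using k by simp
        have "F (- int k) = fps_X * (fps_const a * F (- int k) + fps_const b * F (- int k - 1) + fps_const b * F (- int k + 1))"
          using rec[of "- int k"] k by simp
        thus ?thesis unfolding i1 i2 .
      qed
      have z1: "F (- int k) - fps_X * (fps_const a * F (- int k) + fps_const b * F (- int (k+1)) + fps_const b * F (- int (k-1))) = 0"
        using e1 by simp
      have z2: "Y^k*F 0 - fps_X*(fps_const a*(Y^k*F 0) + fps_const b*(Y^(k-1)*F 0) + fps_const b*(Y^(k+1)*F 0)) = 0"
        using Ypow[OF k] by simp
      have "G k - fps_X * (fps_const a * G k + fps_const b * G (k-1) + fps_const b * G (k+1))
         = (F (- int k) - fps_X * (fps_const a * F (- int k) + fps_const b * F (- int (k+1)) + fps_const b * F (- int (k-1))))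
           - (Y^k*F 0 - fps_X*(fps_const a*(Y^k*F 0) + fps_const b*(Y^(k-1)*F 0) + fps_const b*(Y^(k+1)*F 0)))"
        unfolding G_def by (simp add: algebra_simps)
      also have "\<dots> = 0" using z1 z2 by simp
      finally show "G k = fps_X * (fps_const a * G k + fps_const b * G (k-1) + fps_const b * G (k+1))" by simp
    qed
    thus ?thesis by (simp add: G_def)
  qed
  have F1: "F 1 = Y * F 0" using Gpos[of 1] by simp
  have Fm1: "F (-1) = Y * F 0" using Gneg[of 1] by simp
  have h0: "F 0 + B = 1 + fps_X * (fps_const a * F 0 + fps_const b * (Y * F 0) + fps_const b * (Y * F 0))"
    using rec[of 0] F1 Fm1 by simp
  also have "\<dots> = 1 + (fps_X * (fps_const a + 2*fps_const b * Y)) * F 0" by (simp add: algebra_simps)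
  also have "\<dots> = 1 + (1 - S) * F 0" using YS by simp
  finally have h1: "F 0 + B = 1 + (1 - S) * F 0" .
  have FS: "F 0 * S = 1 - B"
  proof -
    have "F 0 * S = (F 0 + B) - B - (1 - S) * F 0" by (simp add: algebra_simps)
    also have "\<dots> = 1 - B" using h1 by simp
    finally show ?thesis .
  qed
  have F00: "F 0 $ 0 = 1" by (simp add: F_def Fh_0)
  have F0pos: "\<And>n. n \<ge> 1 \<Longrightarrow> geq 1 (F 0 $ n)" by (simp add: F_def Fh_pos)
  define U where "U = inverse (F 0)"
  have posU: "posf U" unfolding U_def by (rule posf_inverse[OF F00 F0pos])
  have UF: "U * F 0 = 1" unfolding U_def using F00 by (intro inverse_mult_eq_1) simp
  have SU: "S = (1 - B) * U"
  proof -
    have "S = (U * F 0) * S" using UF by simp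
    also have "\<dots> = U * (F 0 * S)" by (simp add: algebra_simps)
    also have "\<dots> = (1 - B) * U" unfolding FS by (simp add: mult.commute)
    finally show ?thesis .
  qed
  have dl: "delta A = (1-B)^2 * U^2" using S2 SU by (simp add: power_mult_distrib)
  have cf': "delta A = D * Dx * Dxb" "\<And>n. is_real_const (D $ n)" "\<And>n. is_poly_x (Dx $ n)"
      "\<And>n. is_poly_xbar (Dxb $ n)" "D $ 0 = 1"
      "\<And>n. fls_nth (Dx $ n) 0 = (if n = 0 then 1 else 0)" "Dx $ 0 = 1" "Dxb $ 0 = 1"
    using cf unfolding canonical_factorization_def by auto
  have B0: "B $ 0 = 0" by (simp add: B_def bridge_0)
  have posQ: "posf (U * U)" by (rule posf_mult[OF posU posU])
  have "D * Dxb = (1 - B)^2"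
  proof (rule uq[where P = Dx and Q = "U * U"])
    show "D * Dxb * Dx = (1 - B)^2 * (U * U)" using dl cf'(1) by (simp add: power2_eq_square algebra_simps)
    show "nonpos ((D * Dxb) $ n)" for n
    proof (rule fps_nonpos_mult)
      show "nonpos (D $ n)" for n using cf'(2)[of n] by (auto simp: nonpos_def is_real_const_def)
      show "nonpos (Dxb $ n)" for n using cf'(4)[of n] by (auto simp: nonpos_def is_poly_xbar_def)
    qed
    show "nonpos (((1 - B)^2) $ n)" for n
      unfolding power2_eq_square
    proof (rule fps_nonpos_mult)
      show "nonpos ((1 - B) $ n)" for n
        using bridge_nonpos[of A n] by (cases "n = 0") (auto simp: B_def nonpos_def)
      then show "nonpos ((1 - B) $ n)" for n .
    qed
    show "geq 0 (Dx $ n)" for n using cf'(3)[of n] by (auto simp: geq_def is_poly_x_def)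
    show "geq 0 ((U*U) $ n)" for n using posQ by (rule posf_geq0)
    show "(D * Dxb) $ 0 = 1" using cf' by simp
    show "((1 - B)^2) $ 0 = 1" using B0 by (simp add: power2_eq_square)
    show "Dx $ 0 = 1" by fact
    show "(U*U) $ 0 = 1" using posQ by (simp add: posf_def)
    show "Dx $ n $$ 0 = 0" if "n \<ge> 1" for n using cf'(6)[of n] that by simp
    show "(U*U) $ n $$ 0 = 0" if "n \<ge> 1" for n using posQ that by (auto simp: posf_def geq_def)
  qed
  then have "fps_sqrt1 (D * Dxb) = 1 - B" using B0 by (simp add: sqrt1_eq)
  thus ?thesis by (simp add: B_def)
qed


theorem mainTheorem5:
  fixes A :: "(int \<times> int) set" and D Dx Dxb :: "real fls fps"
  assumes "finite A"
    and "\<And>i j. (i, j) \<in> A \<Longrightarrow> (i, - j) \<in> A"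
    and "\<And>i j. (i, j) \<in> A \<Longrightarrow> \<bar>j\<bar> \<le> 1"
    and "A1 A \<noteq> 0"
    and "canonical_factorization A D Dx Dxb"
  shows "bridge_gf A = 1 - fps_sqrt1 (D * Dxb)"
  by (rule mainTheorem5'[OF assms])

end
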